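(* Let $a,b,q$ be complex numbers with $|q|<1$, $b\neq0$, and let $G(z)=\sum_{n=0}^{\infty}t_nz^n\in\mathbb{C}[[z]]$. Define, for parameters $\alpha,\beta$, $$\widetilde{G}(z;\alpha,\beta):=\sum_{n=0}^\infty t_n z^n\frac{(\alpha z;q)_n}{(\beta z;q)_n}.$$ Then, as formal power series in $z$, $$\frac{(az;q)_\infty}{(bz;q)_\infty}G(z)=\sum_{n=0}^{\infty}\frac{(aq/b;q)_n(az;q)_n}{(q;q)_n(bz;q)_n}(bz)^nq^{n(n-1)}\Big(\widetilde{G}(zq^n;a,b)-azq^{2n}\,\widetilde{G}(zq^{n+1};a/q,b/q)\Big).$$
   Context: $(x;q)_\infty=\prod_{j\ge0}(1-xq^j)$ and $(x;q)_n=\prod_{j=0}^{n-1}(1-xq^j)$ for integers $n\ge0$; products and quotients of these with arguments multiples of $z$ are regarded as formal power series in $z$. *)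

theory Defs
  imports Complex_Main "HOL-Computational_Algebra.Formal_Power_Series"
begin

definition qpoch :: "complex \<Rightarrow> complex \<Rightarrow> nat \<Rightarrow> complex" where
  "qpoch c q n = (\<Prod>j<n. 1 - c * q ^ j)"

definition qpoch_fps :: "complex \<Rightarrow> complex \<Rightarrow> nat \<Rightarrow> complex fps" where
  "qpoch_fps c q n = (\<Prod>j<n. 1 - fps_const (c * q ^ j) * fps_X)"

definition fps_lim :: "(nat \<Rightarrow> complex fps) \<Rightarrow> complex fps" where
  "fps_lim f = Abs_fps (\<lambda>k. lim (\<lambda>n. fps_nth (f n) k))"

definition fps_suminf :: "(nat \<Rightarrow> complex fps) \<Rightarrow> complex fps" where
  "fps_suminf f = Abs_fps (\<lambda>k. \<Sum>n. fps_nth (f n) k)"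

definition qpoch_inf_fps :: "complex \<Rightarrow> complex \<Rightarrow> complex fps" where
  "qpoch_inf_fps c q = fps_lim (\<lambda>n. qpoch_fps c q n)"

definition Gtilde :: "complex \<Rightarrow> complex fps \<Rightarrow> complex \<Rightarrow> complex \<Rightarrow> complex fps" where
  "Gtilde q G \<alpha> \<beta> = fps_suminf (\<lambda>n. fps_const (fps_nth G n) * fps_X ^ n
        * qpoch_fps \<alpha> q n * inverse (qpoch_fps \<beta> q n))"

definition fps_subst_scale :: "complex fps \<Rightarrow> complex \<Rightarrow> complex fps" where
  "fps_subst_scale f c = f oo (fps_const c * fps_X)"

end

theory Submission
  imports Defs
begin
unbundle fps_syntax


lemma key_alg:
 fixes X A A' iB iE C P K U a b q :: "'r::idom"
 assumes "(1 - a*X)*A' = A*(1 - a*U*X)" "(1 - b*U*X)*iE = 1"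
 shows "C*A*iB*P*K*(1 - a*X*U^2)*(1 - b*X) - (1 - a*X) * (C*A'*((1 - b*X)*iB*iE)*(U*P)*K*(1 - a*(q*X)*U^2))
   = C*(1-U)*A*(1-b*X)*iB*P*K - C*(b - a*q*U)*A*(1-a*U*X)*(1-b*X)*(iB*iE)*(P*X)*K*U^2"
  using assms by algebra

lemma key2:
 fixes C An iBn P K Gc Um Xm An' iBn' aa X S2 V Am iBm Am' iBm' :: "'r::idom"
 assumes "An*An' = Am*Am'" "iBn*iBn' = iBm*iBm'"
 shows "C*An*iBn*P*K*(Gc*(Um*Xm)*An'*iBn' - aa*X*S2*(Gc*(Um*V*Xm)*An'*iBn'))
   = Gc*(Xm*Am*iBm*(C*Am'*iBm'*(P*Um)*K*(1 - aa*V*X*S2)))"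
  using assms by algebra



definition ordge :: "nat \<Rightarrow> complex fps \<Rightarrow> bool" where
  "ordge n f \<longleftrightarrow> (\<forall>i<n. f $ i = 0)"

lemma ordge_mono: "ordge n f \<Longrightarrow> m \<le> n \<Longrightarrow> ordge m f"
  by (auto simp: ordge_def)

lemma ordge_diff: "ordge n f \<Longrightarrow> ordge n g \<Longrightarrow> ordge n (f - g)"
  by (auto simp: ordge_def)

lemma ordge_mult_left: "ordge n f \<Longrightarrow> ordge n (g * f)"
  unfolding ordge_def fps_mult_nth by (auto intro!: sum.neutral)

lemma ordge_mult_right: "ordge n f \<Longrightarrow> ordge n (f * g)"
  using ordge_mult_left[of n f g] by (simp add: mult.commute)

lemma ordge_Xpow: "ordge n (fps_X ^ n * g)"
  by (simp add: ordge_def fps_X_power_mult_nth)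

lemma ordge_bXpow: "ordge n ((fps_const b * fps_X) ^ n)"
proof -
  have "(fps_const b * fps_X) ^ n = fps_X ^ n * fps_const (b ^ n)"
    by (simp add: power_mult_distrib fps_const_power mult.commute)
  thus ?thesis using ordge_Xpow by simp
qed

lemma suminf_nth:
  assumes "\<And>n. ordge n (f n)"
  shows "fps_suminf f $ k = (\<Sum>n\<le>k. f n $ k)"
proof -
  have "(\<Sum>n. f n $ k) = (\<Sum>n\<in>{..k}. f n $ k)"
    by (rule suminf_finite) (use assms in \<open>auto simp: ordge_def\<close>)
  thus ?thesis by (simp add: fps_suminf_def)
qed

lemma suminf_diff:
  assumes "\<And>n. ordge n (f n)" "\<And>n. ordge n (g n)"
  shows "fps_suminf f - fps_suminf g = fps_suminf (\<lambda>n. f n - g n)"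
  by (rule fps_ext) (simp add: suminf_nth assms ordge_diff sum_subtractf)

lemma suminf_mult_left:
  assumes "\<And>n. ordge n (f n)"
  shows "A * fps_suminf f = fps_suminf (\<lambda>n. A * f n)"
proof (rule fps_ext)
  fix k
  have "(A * fps_suminf f) $ k = (\<Sum>i=0..k. A $ i * (\<Sum>n\<le>k-i. f n $ (k - i)))"
    by (simp add: fps_mult_nth suminf_nth assms)
  also have "\<dots> = (\<Sum>i=0..k. A $ i * (\<Sum>n\<le>k. f n $ (k - i)))"
  proof (rule sum.cong[OF refl])
    fix i assume "i \<in> {0..k}"
    have "(\<Sum>n\<le>k-i. f n $ (k - i)) = (\<Sum>n\<le>k. f n $ (k - i))"
      by (rule sum.mono_neutral_left) (use assms in \<open>auto simp: ordge_def\<close>)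
    thus "A $ i * (\<Sum>n\<le>k-i. f n $ (k - i)) = A $ i * (\<Sum>n\<le>k. f n $ (k - i))" by simp
  qed
  also have "\<dots> = (\<Sum>n\<le>k. (A * f n) $ k)"
    by (simp add: fps_mult_nth sum_distrib_left sum.swap[of _ "{0..k}"])
  also have "\<dots> = fps_suminf (\<lambda>n. A * f n) $ k"
    by (simp add: suminf_nth assms ordge_mult_left)
  finally show "(A * fps_suminf f) $ k = fps_suminf (\<lambda>n. A * f n) $ k" .
qed

lemma suminf_mult_right:
  assumes "\<And>n. ordge n (f n)"
  shows "fps_suminf f * A = fps_suminf (\<lambda>n. f n * A)"
  using suminf_mult_left[of f A, OF assms] by (simp add: mult.commute)

lemma suminf_telescope:
  assumes "\<And>n. ordge n (W n)"
  shows "fps_suminf (\<lambda>n. W n - W (Suc n)) = W 0"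
proof (rule fps_ext)
  fix k
  have o: "ordge n (W n - W (Suc n))" for n
    using assms[of n] ordge_mono[OF assms[of "Suc n"], of n] by (auto intro: ordge_diff)
  have "fps_suminf (\<lambda>n. W n - W (Suc n)) $ k = W 0 $ k - W (Suc k) $ k"
    using suminf_nth[of "\<lambda>n. W n - W (Suc n)", OF o] sum_telescope[of "\<lambda>n. W n $ k" k] by simp
  thus "fps_suminf (\<lambda>n. W n - W (Suc n)) $ k = W 0 $ k"
    using assms[of "Suc k"] by (simp add: ordge_def)
qed

lemma sc_nth: "fps_subst_scale f c $ k = c ^ k * f $ k"
  by (simp add: fps_subst_scale_def fps_compose_linear)

lemma sc_mult: "fps_subst_scale (f * g) c = fps_subst_scale f c * fps_subst_scale g c"
  unfolding fps_subst_scale_def by (rule fps_compose_mult_distrib) simp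

lemma sc_diff: "fps_subst_scale (f - g) c = fps_subst_scale f c - fps_subst_scale g c"
  by (rule fps_ext) (simp add: sc_nth algebra_simps)

lemma sc_const: "fps_subst_scale (fps_const d) c = fps_const d"
  by (rule fps_ext) (simp add: sc_nth)

lemma sc_one: "fps_subst_scale 1 c = 1"
  by (rule fps_ext) (simp add: sc_nth)

lemma sc_X: "fps_subst_scale fps_X c = fps_const c * fps_X"
  by (rule fps_ext) (auto simp: sc_nth fps_X_def)

lemma sc_power: "fps_subst_scale (f ^ n) c = fps_subst_scale f c ^ n"
  by (induction n) (simp_all add: sc_one sc_mult)

lemma sc_inverse:
  assumes "f $ 0 \<noteq> 0"
  shows "fps_subst_scale (inverse f) c = inverse (fps_subst_scale f c)"
proof -
  have "fps_subst_scale f c * fps_subst_scale (inverse f) c = 1"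
    using assms by (simp add: sc_mult[symmetric] inverse_mult_eq_1' sc_one)
  thus ?thesis by (rule fps_inverse_unique[symmetric])
qed

lemma sc_sc: "fps_subst_scale (fps_subst_scale f c) d = fps_subst_scale f (c * d)"
  by (rule fps_ext) (simp add: sc_nth power_mult_distrib)

lemma ordge_sc: "ordge n f \<Longrightarrow> ordge n (fps_subst_scale f c)"
  by (simp add: ordge_def sc_nth)

lemma sc_suminf:
  assumes "\<And>n. ordge n (f n)"
  shows "fps_subst_scale (fps_suminf f) c = fps_suminf (\<lambda>n. fps_subst_scale (f n) c)"
  by (rule fps_ext) (simp add: sc_nth suminf_nth assms ordge_sc sum_distrib_left)




lemma lin_nth: fixes g :: "complex fps" shows "((1 - fps_const c * fps_X) * g) $ k = g $ k - (if k = 0 then 0 else c * g $ (k - 1))"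
proof -
  have "(1 - fps_const c * fps_X) * g = g - fps_const c * (fps_X * g)" by (simp add: left_diff_distrib mult.assoc)
  thus ?thesis by simp
qed

lemma lin_nth': fixes g :: "complex fps" shows "(g * (1 - fps_const c * fps_X)) $ k = g $ k - (if k = 0 then 0 else c * g $ (k - 1))"
  using lin_nth[of c g k] by (simp only: mult.commute)

lemma lin0: "(1 - fps_const c * fps_X :: complex fps) $ 0 = 1" by simp

lemma Q_0[simp]: "qpoch_fps c q 0 = 1" by (simp add: qpoch_fps_def)

lemma Q_Suc: "qpoch_fps c q (Suc n) = qpoch_fps c q n * (1 - fps_const (c * q ^ n) * fps_X)"
  by (simp add: qpoch_fps_def)

lemma Q_nth0[simp]: "qpoch_fps c q n $ 0 = 1"
  by (induction n) (simp_all add: Q_Suc lin_nth')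

lemma Q_shift: "qpoch_fps c q (Suc n) = (1 - fps_const c * fps_X) * qpoch_fps (c * q) q n"
proof (induction n)
  case 0 thus ?case by (simp add: Q_Suc)
next
  case (Suc n)
  have "qpoch_fps c q (Suc (Suc n)) = qpoch_fps c q (Suc n) * (1 - fps_const (c * q ^ Suc n) * fps_X)"
    by (rule Q_Suc)
  also have "\<dots> = (1 - fps_const c * fps_X) * (qpoch_fps (c * q) q n * (1 - fps_const (c * q * q ^ n) * fps_X))"
    by (simp add: Suc mult_ac)
  also have "\<dots> = (1 - fps_const c * fps_X) * qpoch_fps (c * q) q (Suc n)"
    by (simp add: Q_Suc)
  finally show ?case .
qed

lemma Q_add: "qpoch_fps c q (n + m) = qpoch_fps c q n * qpoch_fps (c * q ^ n) q m"
  by (induction m) (simp_all add: Q_Suc power_add mult_ac)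

lemma sc_Q: "fps_subst_scale (qpoch_fps c q n) d = qpoch_fps (c * d) q n"
  by (induction n) (simp_all add: Q_Suc sc_mult sc_diff sc_one sc_const sc_X mult_ac)

lemma Q_Suc_nth: "qpoch_fps c q (Suc n) $ Suc k = qpoch_fps c q n $ Suc k - c * q ^ n * qpoch_fps c q n $ k"
  by (simp add: Q_Suc lin_nth')

context
  fixes q :: complex
  assumes q1: "norm q < 1"
begin

lemma Q_conv: "convergent (\<lambda>n. qpoch_fps c q n $ k)"
proof (induction k)
  case 0 thus ?case by (simp add: convergent_const)
next
  case (Suc k)
  have "Bseq (\<lambda>n. qpoch_fps c q n $ k)" using Suc by (rule convergent_imp_Bseq)
  then obtain B where B: "B > 0" "\<And>n. norm (qpoch_fps c q n $ k) \<le> B"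
    by (rule BseqE) blast
  define f where "f j = - (c * q ^ j * qpoch_fps c q j $ k)" for j
  have S: "summable (\<lambda>j. norm c * B * norm q ^ j)"
    using q1 by (intro summable_mult summable_geometric) simp
  have bd: "norm (f j) \<le> norm c * B * norm q ^ j" for j
  proof -
    have "norm (f j) = (norm c * norm q ^ j) * norm (qpoch_fps c q j $ k)"
      by (simp add: f_def norm_mult norm_power)
    also have "\<dots> \<le> (norm c * norm q ^ j) * B" by (intro mult_left_mono B(2)) simp
    finally show ?thesis by (simp add: mult_ac)
  qed
  have "summable f"
    by (rule summable_comparison_test'[where N=0, OF S]) (rule bd)
  hence "convergent (\<lambda>n. \<Sum>j<n. f j)" by (simp add: summable_iff_convergent)
  moreover have "(\<Sum>j<n. f j) = qpoch_fps c q n $ Suc k" for n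
  proof (induction n)
    case 0 thus ?case by simp
  next
    case (Suc n) thus ?case by (simp add: f_def Q_Suc_nth)
  qed
  ultimately show ?case by simp
qed

lemma Q_lim: "(\<lambda>n. qpoch_fps c q n $ k) \<longlonglongrightarrow> qpoch_inf_fps c q $ k"
  using Q_conv[of c k] by (simp add: qpoch_inf_fps_def fps_lim_def convergent_LIMSEQ_iff)

lemma P_nth0: "qpoch_inf_fps c q $ 0 = 1"
  using Q_lim[of c 0] by (simp add: LIMSEQ_const_iff)

lemma P_shift: "qpoch_inf_fps c q = (1 - fps_const c * fps_X) * qpoch_inf_fps (c * q) q"
proof (rule fps_ext)
  fix k
  have "(\<lambda>n. qpoch_fps c q (Suc n) $ k) \<longlonglongrightarrow> qpoch_inf_fps c q $ k"
    using Q_lim by (rule LIMSEQ_Suc)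
  moreover have "(\<lambda>n. qpoch_fps c q (Suc n) $ k) \<longlonglongrightarrow> ((1 - fps_const c * fps_X) * qpoch_inf_fps (c * q) q) $ k"
    unfolding Q_shift lin_nth by (cases k) (auto intro!: tendsto_intros Q_lim simp: P_nth0)
  ultimately show "qpoch_inf_fps c q $ k = ((1 - fps_const c * fps_X) * qpoch_inf_fps (c * q) q) $ k"
    by (rule LIMSEQ_unique)
qed

lemma P_sc: "fps_subst_scale (qpoch_inf_fps c q) d = qpoch_inf_fps (c * d) q"
proof (rule fps_ext)
  fix k
  have "(\<lambda>n. d ^ k * qpoch_fps c q n $ k) \<longlonglongrightarrow> d ^ k * qpoch_inf_fps c q $ k"
    by (intro tendsto_intros Q_lim)
  moreover have "(\<lambda>n. d ^ k * qpoch_fps c q n $ k) = (\<lambda>n. qpoch_fps (c * d) q n $ k)"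
  proof
    fix n show "d ^ k * qpoch_fps c q n $ k = qpoch_fps (c * d) q n $ k"
      using sc_nth[of "qpoch_fps c q n" d k] sc_Q[where c=c and n=n and d=d and q=q] by simp
  qed
  ultimately have "(\<lambda>n. qpoch_fps (c * d) q n $ k) \<longlonglongrightarrow> d ^ k * qpoch_inf_fps c q $ k" by simp
  with Q_lim show "fps_subst_scale (qpoch_inf_fps c q) d $ k = qpoch_inf_fps (c * d) q $ k"
    by (simp add: sc_nth LIMSEQ_unique)
qed

lemma P_add: "qpoch_inf_fps c q = qpoch_fps c q m * qpoch_inf_fps (c * q ^ m) q"
proof (induction m)
  case 0 thus ?case by simp
next
  case (Suc m)
  have "qpoch_inf_fps c q = qpoch_fps c q m * ((1 - fps_const (c * q ^ m) * fps_X) * qpoch_inf_fps (c * q ^ m * q) q)"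
    using Suc P_shift[of "c * q ^ m"] by simp
  thus ?case by (simp add: Q_Suc mult_ac)
qed

definition F :: "complex \<Rightarrow> complex \<Rightarrow> complex fps" where
  "F a b = qpoch_inf_fps a q * inverse (qpoch_inf_fps b q)"

lemma F_nth0: "F a b $ 0 = 1"
  by (simp add: F_def P_nth0)

lemma F_func: "F a b * (1 - fps_const b * fps_X) = (1 - fps_const a * fps_X) * fps_subst_scale (F a b) q"
proof -
  have i1: "inverse (1 - fps_const b * fps_X) * (1 - fps_const b * fps_X) = 1"
    by (rule inverse_mult_eq_1) simp
  have "F a b * (1 - fps_const b * fps_X) =
        qpoch_inf_fps a q * inverse (qpoch_inf_fps (b * q) q) * (inverse (1 - fps_const b * fps_X) * (1 - fps_const b * fps_X))"
    unfolding F_def by (subst P_shift[of b]) (simp add: fps_inverse_mult mult_ac)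
  also have "\<dots> = qpoch_inf_fps a q * inverse (qpoch_inf_fps (b * q) q)"
    by (simp add: i1)
  also have "\<dots> = (1 - fps_const a * fps_X) * (qpoch_inf_fps (a * q) q * inverse (qpoch_inf_fps (b * q) q))"
    by (subst P_shift[of a]) (simp only: mult.assoc)
  also have "\<dots> = (1 - fps_const a * fps_X) * fps_subst_scale (F a b) q"
    by (simp add: F_def sc_mult sc_inverse P_nth0 P_sc)
  finally show ?thesis .
qed

lemma F_add: "F a b = qpoch_fps a q m * inverse (qpoch_fps b q m) * F (a * q ^ m) (b * q ^ m)"
  unfolding F_def by (subst P_add[of a m], subst P_add[of b m]) (simp add: fps_inverse_mult mult_ac)

lemma uniq0:
  assumes "h * (1 - fps_const b * fps_X) = (1 - fps_const a * fps_X) * fps_subst_scale h q"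
    and "h $ 0 = 0"
  shows "h = 0"
proof -
  have "h $ k = 0" for k
  proof (induction k)
    case 0 thus ?case using assms(2) .
  next
    case (Suc k)
    have "(h * (1 - fps_const b * fps_X)) $ Suc k = ((1 - fps_const a * fps_X) * fps_subst_scale h q) $ Suc k"
      using assms(1) by simp
    hence "h $ Suc k = q ^ Suc k * h $ Suc k"
      by (simp add: lin_nth lin_nth' sc_nth Suc)
    moreover have "q ^ Suc k \<noteq> 1"
    proof
      assume "q ^ Suc k = 1"
      hence "norm q ^ Suc k = 1" by (metis norm_one norm_power)
      moreover have "norm q ^ Suc k < 1" using q1 power_less_one_iff[of "norm q" "Suc k"] by (simp del: power_Suc)
      ultimately show False by simp
    qed
    ultimately show ?case by (metis mult_cancel_right2)
  qed
  thus ?thesis by (simp add: fps_eq_iff)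
qed

lemma uniq:
  assumes "f * (1 - fps_const b * fps_X) = (1 - fps_const a * fps_X) * fps_subst_scale f q"
    and "g * (1 - fps_const b * fps_X) = (1 - fps_const a * fps_X) * fps_subst_scale g q"
    and "f $ 0 = g $ 0"
  shows "f = g"
proof -
  have "f - g = 0"
  proof (rule uniq0[of _ b a])
    have "(f - g) * (1 - fps_const b * fps_X) = f * (1 - fps_const b * fps_X) - g * (1 - fps_const b * fps_X)"
      by (rule left_diff_distrib)
    also have "\<dots> = (1 - fps_const a * fps_X) * fps_subst_scale f q - (1 - fps_const a * fps_X) * fps_subst_scale g q"
      by (simp only: assms)
    also have "\<dots> = (1 - fps_const a * fps_X) * fps_subst_scale (f - g) q"
      by (simp only: sc_diff right_diff_distrib)
    finally show "(f - g) * (1 - fps_const b * fps_X) = (1 - fps_const a * fps_X) * fps_subst_scale (f - g) q" .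
    show "(f - g) $ 0 = 0" using assms(3) by simp
  qed
  thus ?thesis by simp
qed

end



context
  fixes q :: complex
  assumes q1: "norm q < 1" and q0: "q \<noteq> 0"
begin

definition cc :: "complex \<Rightarrow> complex \<Rightarrow> nat \<Rightarrow> complex" where
  "cc a b n = qpoch (a * q / b) q n / qpoch q q n"

definition tau :: "complex \<Rightarrow> complex \<Rightarrow> nat \<Rightarrow> complex fps" where
  "tau a b n = fps_const (cc a b n) * qpoch_fps a q n * inverse (qpoch_fps b q n)
      * (fps_const b * fps_X) ^ n * fps_const (q ^ (n * (n - 1)))
      * (1 - fps_const a * fps_X * fps_const (q ^ (2 * n)))"

definition W :: "complex \<Rightarrow> complex \<Rightarrow> nat \<Rightarrow> complex fps" where
  "W a b n = fps_const (cc a b n * (1 - q ^ n)) * qpoch_fps a q n * (1 - fps_const b * fps_X)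
      * inverse (qpoch_fps b q n) * (fps_const b * fps_X) ^ n * fps_const (q ^ (n * (n - 1)))"

lemma qpoch_Suc: "qpoch c q (Suc n) = qpoch c q n * (1 - c * q ^ n)"
  by (simp add: qpoch_def)

lemma qq_nz: "qpoch q q n \<noteq> 0"
proof -
  have "1 - q * q ^ j \<noteq> 0" for j
  proof
    assume "1 - q * q ^ j = 0"
    hence "q ^ Suc j = 1" by simp
    hence "norm (q ^ Suc j) = 1" by simp
    moreover have "norm q ^ Suc j < 1"
      using q1 power_less_one_iff[of "norm q" "Suc j"] by (simp del: power_Suc)
    ultimately show False by (simp only: norm_power)
  qed
  thus ?thesis by (simp add: qpoch_def)
qed

lemma cc_Suc:
  assumes "b \<noteq> 0"
  shows "cc a b (Suc n) * (1 - q ^ Suc n) * b = cc a b n * (b - a * q * q ^ n)"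
proof -
  have "1 - q ^ Suc n \<noteq> 0" using qq_nz[of "Suc n"] by (simp add: qpoch_def)
  thus ?thesis using assms qq_nz[of n]
    by (simp add: cc_def qpoch_Suc field_simps)
qed

lemma cc_0: "cc a b 0 = 1" by (simp add: cc_def qpoch_def)

lemma W_0: "W a b 0 = 0" by (simp add: W_def)

lemma ordge_tau: "ordge n (tau a b n)"
  unfolding tau_def by (intro ordge_mult_right ordge_mult_left ordge_bXpow)

lemma ordge_W: "ordge n (W a b n)"
  unfolding W_def by (intro ordge_mult_right ordge_mult_left ordge_bXpow)

lemma tele:
  assumes "b \<noteq> 0"
  shows "tau a b n * (1 - fps_const b * fps_X) - (1 - fps_const a * fps_X) * fps_subst_scale (tau a b n) q
       = W a b n - W a b (Suc n)"
proof -
  define u where "u = q ^ n"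
  define U where "U = fps_const u"
  define A where "A = qpoch_fps a q n"
  define A' where "A' = qpoch_fps (a * q) q n"
  define B where "B = qpoch_fps b q n"
  define iB where "iB = inverse B"
  define E where "E = 1 - fps_const b * U * fps_X"
  define iE where "iE = inverse E"
  define C where "C = fps_const (cc a b n)"
  define P where "P = (fps_const b * fps_X) ^ n"
  define K where "K = fps_const (q ^ (n * (n - 1)))"
  have nz: "qpoch_fps c q m $ 0 \<noteq> 0" for c m by simp
  have EiE: "E * iE = 1" unfolding iE_def E_def by (rule inverse_mult_eq_1') simp
  have BiB: "B * iB = 1" unfolding iB_def B_def by (rule inverse_mult_eq_1') simp
  have QS: "qpoch_fps c q (Suc n) = qpoch_fps c q n * (1 - fps_const c * U * fps_X)" for c
    unfolding U_def u_def fps_const_mult by (rule Q_Suc)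
  have f2: "(1 - fps_const a * fps_X) * A' = A * (1 - fps_const a * U * fps_X)"
    unfolding A'_def A_def QS[symmetric] by (rule Q_shift[symmetric])
  have f3: "inverse (qpoch_fps (b * q) q n) = (1 - fps_const b * fps_X) * iB * iE"
  proof (rule fps_inverse_unique)
    have "qpoch_fps (b * q) q n * ((1 - fps_const b * fps_X) * iB * iE)
        = ((1 - fps_const b * fps_X) * qpoch_fps (b * q) q n) * iB * iE" by (simp only: mult_ac)
    also have "(1 - fps_const b * fps_X) * qpoch_fps (b * q) q n = B * E"
      unfolding B_def E_def QS[symmetric] by (rule Q_shift[symmetric])
    also have "B * E * iB * iE = (B * iB) * (E * iE)" by (simp only: mult_ac)
    finally show "qpoch_fps (b * q) q n * ((1 - fps_const b * fps_X) * iB * iE) = 1"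
      using EiE BiB by simp
  qed
  have sP: "fps_subst_scale P q = U * P"
    unfolding P_def U_def u_def
    by (simp add: sc_power sc_mult sc_const sc_X power_mult_distrib mult_ac)
  have q2: "q ^ (2 * n) = u ^ 2" unfolding u_def by (simp add: power_mult[symmetric] mult.commute)
  have sq: "fps_const (q ^ (2 * n)) = U ^ 2" by (simp add: U_def q2)
  have "fps_subst_scale (tau a b n) q = C * A' * inverse (qpoch_fps (b * q) q n) * fps_subst_scale P q * K
      * (1 - fps_const a * (fps_const q * fps_X) * fps_const (q ^ (2 * n)))"
    unfolding tau_def C_def A'_def P_def K_def
    by (simp only: sc_mult sc_const sc_Q sc_inverse[OF nz] sc_diff sc_one sc_X)
  also note f3
  also note sP
  also note sq
  finally have s1: "fps_subst_scale (tau a b n) q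
     = C * A' * ((1 - fps_const b * fps_X) * iB * iE) * (U * P) * K * (1 - fps_const a * (fps_const q * fps_X) * U^2)" .
  have t1: "tau a b n = C * A * iB * P * K * (1 - fps_const a * fps_X * U^2)"
    by (simp only: tau_def C_def A_def iB_def B_def P_def K_def sq)
  have wc: "fps_const (cc a b n * (1 - q ^ n)) = C * (1 - U)"
    by (simp add: C_def U_def u_def algebra_simps)
  have w1: "W a b n = C * (1 - U) * A * (1 - fps_const b * fps_X) * iB * P * K"
    unfolding W_def wc by (simp only: A_def iB_def B_def P_def K_def)
  have nn: "Suc n * (Suc n - 1) = n * (n - 1) + 2 * n" by (cases n) auto
  have kk: "fps_const (q ^ (Suc n * (Suc n - 1))) = K * U ^ 2"
    unfolding nn power_add q2 by (simp add: K_def U_def)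
  have iSuc: "inverse (qpoch_fps b q n * (1 - fps_const b * U * fps_X)) = iB * iE"
    unfolding fps_inverse_mult iB_def B_def iE_def E_def ..
  have cs: "fps_const (cc a b (Suc n) * (1 - q ^ Suc n)) * fps_const b = C * (fps_const b - fps_const a * fps_const q * U)"
    using cc_Suc[OF assms, of a n] by (simp add: C_def U_def u_def)
  have "W a b (Suc n) = fps_const (cc a b (Suc n) * (1 - q ^ Suc n)) * (A * (1 - fps_const a * U * fps_X))
       * (1 - fps_const b * fps_X) * (iB * iE) * (P * (fps_const b * fps_X)) * (K * U ^ 2)"
    unfolding W_def kk QS iSuc power_Suc2 by (simp only: A_def P_def)
  also have "\<dots> = (fps_const (cc a b (Suc n) * (1 - q ^ Suc n)) * fps_const b) * A * (1 - fps_const a * U * fps_X)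
       * (1 - fps_const b * fps_X) * (iB * iE) * (P * fps_X) * K * U ^ 2"
    by (simp only: mult_ac)
  also note cs
  finally have w2: "W a b (Suc n) = C * (fps_const b - fps_const a * fps_const q * U) * A * (1 - fps_const a * U * fps_X)
      * (1 - fps_const b * fps_X) * (iB * iE) * (P * fps_X) * K * U^2" .
  have EiE': "(1 - fps_const b * U * fps_X) * iE = 1" using EiE by (simp only: E_def)
  show ?thesis
    apply (subst s1)
    apply (subst t1)
    apply (subst w1)
    apply (subst w2)
    apply (rule key_alg[OF f2 EiE'])
    done
qed

end



lemma ordge_Xpow': "ordge n (fps_X ^ n)"
  using ordge_Xpow[of n 1] by simp

lemma ordge_suminf:
  assumes "\<And>n. ordge n (g n)" "\<And>n. ordge m (g n)"
  shows "ordge m (fps_suminf g)"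
  using assms by (auto simp: ordge_def suminf_nth)

lemma suminf_swap:
  assumes "\<And>n m. ordge n (f n m)" "\<And>n m. ordge m (f n m)"
  shows "fps_suminf (\<lambda>m. fps_suminf (\<lambda>n. f n m)) = fps_suminf (\<lambda>n. fps_suminf (\<lambda>m. f n m))"
proof (rule fps_ext)
  fix k
  have o1: "ordge m (fps_suminf (\<lambda>n. f n m))" for m by (rule ordge_suminf) (use assms in auto)
  have o2: "ordge n (fps_suminf (\<lambda>m. f n m))" for n by (rule ordge_suminf) (use assms in auto)
  show "fps_suminf (\<lambda>m. fps_suminf (\<lambda>n. f n m)) $ k = fps_suminf (\<lambda>n. fps_suminf (\<lambda>m. f n m)) $ k"
    unfolding suminf_nth[OF o1] suminf_nth[OF o2] suminf_nth[OF assms(1)] suminf_nth[OF assms(2)]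
    by (rule sum.swap)
qed

lemma G_expand: "G = fps_suminf (\<lambda>m. fps_const (G $ m) * fps_X ^ m)"
proof (rule fps_ext)
  fix k
  have o: "ordge m (fps_const (G $ m) * fps_X ^ m)" for m by (intro ordge_mult_left ordge_Xpow')
  show "G $ k = fps_suminf (\<lambda>m. fps_const (G $ m) * fps_X ^ m) $ k"
  proof -
    have "(\<Sum>n\<le>k. G $ n * (if k = n then 1 else 0)) = (\<Sum>n\<le>k. if k = n then G $ n else 0)"
      by (rule sum.cong) auto
    thus ?thesis by (simp add: suminf_nth o)
  qed
qed

context
  fixes q :: complex
  assumes q1: "norm q < 1" and q0: "q \<noteq> 0"
begin

definition R0 :: "complex \<Rightarrow> complex \<Rightarrow> complex fps" where
  "R0 a b = fps_suminf (tau q a b)"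

lemma R0_func:
  assumes "b \<noteq> 0"
  shows "R0 a b * (1 - fps_const b * fps_X) = (1 - fps_const a * fps_X) * fps_subst_scale (R0 a b) q"
proof -
  note ot = ordge_tau[OF q1 q0]
  have "R0 a b * (1 - fps_const b * fps_X) - (1 - fps_const a * fps_X) * fps_subst_scale (R0 a b) q
      = fps_suminf (\<lambda>n. tau q a b n * (1 - fps_const b * fps_X)) - fps_suminf (\<lambda>n. (1 - fps_const a * fps_X) * fps_subst_scale (tau q a b n) q)"
    unfolding R0_def
    by (simp only: suminf_mult_right[OF ot] sc_suminf[OF ot] suminf_mult_left[OF ordge_sc[OF ot]])
  also have "\<dots> = fps_suminf (\<lambda>n. tau q a b n * (1 - fps_const b * fps_X) - (1 - fps_const a * fps_X) * fps_subst_scale (tau q a b n) q)"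
    by (rule suminf_diff) (intro ordge_mult_right ordge_mult_left ordge_sc ot)+
  also have "\<dots> = fps_suminf (\<lambda>n. W q a b n - W q a b (Suc n))"
    by (simp only: tele[OF q1 q0 assms])
  also have "\<dots> = 0"
    by (simp add: suminf_telescope ordge_W[OF q1 q0] W_0[OF q1 q0])
  finally show ?thesis by simp
qed

lemma R0_nth0: "R0 a b $ 0 = 1"
  unfolding R0_def suminf_nth[OF ordge_tau[OF q1 q0]] by (simp add: tau_def[OF q1 q0] cc_0[OF q1 q0])

lemma F_R0:
  assumes "b \<noteq> 0"
  shows "F q a b = R0 a b"
  by (rule uniq[OF q1, of _ b a]) (simp_all add: F_func[OF q1] R0_func[OF assms] F_nth0[OF q1] R0_nth0)

end



lemma cXpow: "(fps_const (c::complex) * fps_X) ^ m = fps_const (c ^ m) * fps_X ^ m"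
  by (simp add: power_mult_distrib)

definition gt :: "complex \<Rightarrow> complex fps \<Rightarrow> complex \<Rightarrow> complex \<Rightarrow> nat \<Rightarrow> complex fps" where
  "gt q G \<alpha> \<beta> m = fps_const (G $ m) * fps_X ^ m * qpoch_fps \<alpha> q m * inverse (qpoch_fps \<beta> q m)"

lemma Gt_eq: "Gtilde q G \<alpha> \<beta> = fps_suminf (gt q G \<alpha> \<beta>)"
  unfolding Gtilde_def gt_def[abs_def] ..

lemma ordge_gt: "ordge m (gt q G \<alpha> \<beta> m)"
  unfolding gt_def by (intro ordge_mult_right ordge_mult_left ordge_Xpow')

context
  fixes q :: complex
  assumes q1: "norm q < 1" and q0: "q \<noteq> 0"
begin

lemma per_term:
  assumes "b \<noteq> 0"
  shows "fps_const (qpoch (a * q / b) q n / qpoch q q n)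
      * qpoch_fps a q n * inverse (qpoch_fps b q n)
      * (fps_const b * fps_X) ^ n * fps_const (q ^ (n * (n - 1)))
      * (fps_subst_scale (gt q G a b m) (q ^ n)
         - fps_const a * fps_X * fps_const (q ^ (2 * n))
           * fps_subst_scale (gt q G (a / q) (b / q) m) (q ^ (n + 1)))
    = fps_const (G $ m) * (fps_X ^ m * qpoch_fps a q m * inverse (qpoch_fps b q m) * tau q (a * q ^ m) (b * q ^ m) n)"
proof -
  have nz: "qpoch_fps c q k $ 0 \<noteq> 0" for c k by simp
  have g1: "fps_subst_scale (gt q G a b m) (q ^ n)
     = fps_const (G $ m) * (fps_const ((q ^ n) ^ m) * fps_X ^ m) * qpoch_fps (a * q ^ n) q m * inverse (qpoch_fps (b * q ^ n) q m)"
    by (simp only: gt_def sc_mult sc_const sc_power sc_X sc_Q sc_inverse[OF nz] cXpow)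
  have aq: "c / q * q ^ (n + 1) = c * q ^ n" for c using q0 by simp
  have uv: "fps_const ((q ^ (n + 1)) ^ m) = fps_const ((q ^ n) ^ m) * fps_const (q ^ m)"
    by (simp add: power_mult_distrib mult.commute)
  have "fps_subst_scale (gt q G (a / q) (b / q) m) (q ^ (n + 1))
     = fps_const (G $ m) * (fps_const ((q ^ (n + 1)) ^ m) * fps_X ^ m) * qpoch_fps (a / q * q ^ (n + 1)) q m * inverse (qpoch_fps (b / q * q ^ (n + 1)) q m)"
    by (simp only: gt_def sc_mult sc_const sc_power sc_X sc_Q sc_inverse[OF nz] cXpow)
  also note aq
  also note aq
  also note uv
  finally have g2: "fps_subst_scale (gt q G (a / q) (b / q) m) (q ^ (n + 1))
     = fps_const (G $ m) * (fps_const ((q ^ n) ^ m) * fps_const (q ^ m) * fps_X ^ m) * qpoch_fps (a * q ^ n) q m * inverse (qpoch_fps (b * q ^ n) q m)" .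
  have ccq: "cc q (a * q ^ m) (b * q ^ m) n = qpoch (a * q / b) q n / qpoch q q n"
  proof -
    have "a * q ^ m * q / (b * q ^ m) = a * q / b" using q0 assms by (simp add: field_simps)
    thus ?thesis by (simp add: cc_def[OF q1 q0])
  qed
  have pw: "(q ^ m) ^ n = (q ^ n) ^ m" by (simp only: power_mult[symmetric] mult.commute)
  have bp: "(fps_const (b * q ^ m) * fps_X) ^ n = (fps_const b * fps_X) ^ n * fps_const ((q ^ n) ^ m)"
    by (rule fps_ext) (simp add: cXpow pw power_mult_distrib)
  have av: "fps_const (a * q ^ m) = fps_const a * fps_const (q ^ m)" by simp
  have tv: "tau q (a * q ^ m) (b * q ^ m) n = fps_const (qpoch (a * q / b) q n / qpoch q q n)
      * qpoch_fps (a * q ^ m) q n * inverse (qpoch_fps (b * q ^ m) q n)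
      * ((fps_const b * fps_X) ^ n * fps_const ((q ^ n) ^ m)) * fps_const (q ^ (n * (n - 1)))
      * (1 - fps_const a * fps_const (q ^ m) * fps_X * fps_const (q ^ (2 * n)))"
    unfolding tau_def[OF q1 q0] ccq bp av ..
  have AA: "qpoch_fps a q n * qpoch_fps (a * q ^ n) q m = qpoch_fps a q m * qpoch_fps (a * q ^ m) q n"
    by (metis Q_add add.commute)
  have BB: "inverse (qpoch_fps b q n) * inverse (qpoch_fps (b * q ^ n) q m)
      = inverse (qpoch_fps b q m) * inverse (qpoch_fps (b * q ^ m) q n)"
    by (metis Q_add add.commute fps_inverse_mult)
  show ?thesis
    apply (subst g1)
    apply (subst g2)
    apply (subst tv)
    apply (rule key2[OF AA BB])
    done
qed

lemma main:
  assumes "b \<noteq> 0"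
  shows "qpoch_inf_fps a q * inverse (qpoch_inf_fps b q) * G =
    fps_suminf (\<lambda>n.
      fps_const (qpoch (a * q / b) q n / qpoch q q n)
      * qpoch_fps a q n * inverse (qpoch_fps b q n)
      * (fps_const b * fps_X) ^ n * fps_const (q ^ (n * (n - 1)))
      * (fps_subst_scale (Gtilde q G a b) (q ^ n)
         - fps_const a * fps_X * fps_const (q ^ (2 * n))
           * fps_subst_scale (Gtilde q G (a / q) (b / q)) (q ^ (n + 1))))"
proof -
  define \<phi> where "\<phi> n m = fps_const (G $ m) * (fps_X ^ m * qpoch_fps a q m * inverse (qpoch_fps b q m) * tau q (a * q ^ m) (b * q ^ m) n)" for n m
  note ot = ordge_tau[OF q1 q0]
  have o1: "ordge n (\<phi> n m)" for n m unfolding \<phi>_def by (intro ordge_mult_left ot)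
  have o2: "ordge m (\<phi> n m)" for n m unfolding \<phi>_def
    by (intro ordge_mult_left ordge_mult_right ordge_Xpow')
  have T: "fps_const (qpoch (a * q / b) q n / qpoch q q n)
      * qpoch_fps a q n * inverse (qpoch_fps b q n)
      * (fps_const b * fps_X) ^ n * fps_const (q ^ (n * (n - 1)))
      * (fps_subst_scale (Gtilde q G a b) (q ^ n)
         - fps_const a * fps_X * fps_const (q ^ (2 * n))
           * fps_subst_scale (Gtilde q G (a / q) (b / q)) (q ^ (n + 1)))
     = fps_suminf (\<lambda>m. \<phi> n m)" for n
  proof -
    have og: "ordge m (fps_subst_scale (gt q G \<alpha> \<beta> m) c)" for m \<alpha> \<beta> c
      by (intro ordge_sc ordge_gt)
    have og2: "ordge m (fps_const a * fps_X * fps_const (q ^ (2 * n)) * fps_subst_scale (gt q G \<alpha> \<beta> m) c)" for m \<alpha> \<beta> c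
      by (intro ordge_mult_left og)
    have od: "ordge m (fps_subst_scale (gt q G a b m) (q ^ n)
         - fps_const a * fps_X * fps_const (q ^ (2 * n)) * fps_subst_scale (gt q G (a / q) (b / q) m) (q ^ (n + 1)))" for m
      by (intro ordge_diff og og2)
    show ?thesis
      unfolding Gt_eq sc_suminf[OF ordge_gt] suminf_mult_left[OF og] suminf_diff[OF og og2]
        suminf_mult_left[OF od] per_term[OF assms] \<phi>_def ..
  qed
  have L: "qpoch_inf_fps a q * inverse (qpoch_inf_fps b q) * G = fps_suminf (\<lambda>m. fps_suminf (\<lambda>n. \<phi> n m))"
  proof -
    have oc: "ordge m (fps_const (G $ m) * fps_X ^ m)" for m by (intro ordge_mult_left ordge_Xpow')
    have e: "F q a b * (fps_const (G $ m) * fps_X ^ m) = fps_suminf (\<lambda>n. \<phi> n m)" for m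
    proof -
      have bm: "b * q ^ m \<noteq> 0" using assms q0 by simp
      have ox: "ordge n (fps_X ^ m * qpoch_fps a q m * inverse (qpoch_fps b q m) * tau q (a * q ^ m) (b * q ^ m) n)" for n
        by (intro ordge_mult_left ot)
      have "F q a b * (fps_const (G $ m) * fps_X ^ m)
          = fps_const (G $ m) * (fps_X ^ m * qpoch_fps a q m * inverse (qpoch_fps b q m) * R0 q (a * q ^ m) (b * q ^ m))"
        unfolding F_add[OF q1, of a b m] F_R0[OF q1 q0 bm] by (simp only: mult_ac)
      also have "\<dots> = fps_suminf (\<lambda>n. \<phi> n m)"
        unfolding R0_def[OF q1 q0] suminf_mult_left[OF ot] suminf_mult_left[OF ox] \<phi>_def ..
      finally show ?thesis .
    qed
    have "qpoch_inf_fps a q * inverse (qpoch_inf_fps b q) * G = F q a b * fps_suminf (\<lambda>m. fps_const (G $ m) * fps_X ^ m)"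
      unfolding F_def[OF q1] by (rule arg_cong[OF G_expand])
    also have "\<dots> = fps_suminf (\<lambda>m. fps_suminf (\<lambda>n. \<phi> n m))"
      unfolding suminf_mult_left[OF oc] e ..
    finally show ?thesis .
  qed
  show ?thesis
    unfolding L T by (rule suminf_swap[OF o1 o2])
qed

end


theorem theorem1p2:
  fixes a b q :: complex and G :: "complex fps"
  assumes "norm q < 1" and "q \<noteq> 0" and "b \<noteq> 0"
  shows "qpoch_inf_fps a q * inverse (qpoch_inf_fps b q) * G =
    fps_suminf (\<lambda>n.
      fps_const (qpoch (a * q / b) q n / qpoch q q n)
      * qpoch_fps a q n * inverse (qpoch_fps b q n)
      * (fps_const b * fps_X) ^ n * fps_const (q ^ (n * (n - 1)))
      * (fps_subst_scale (Gtilde q G a b) (q ^ n)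
         - fps_const a * fps_X * fps_const (q ^ (2 * n))
           * fps_subst_scale (Gtilde q G (a / q) (b / q)) (q ^ (n + 1))))"
  by (rule main[OF assms(1) assms(2) assms(3)])

end
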